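(* For every instance such that $K:=\pi_1+\pi_3+\pi_4-1\ge 1$ and $|S_2|\le K$, we have $H^{PW''}\le \tfrac{15}{8}H^*$.
   Context: An instance consists of an integer $n\ge 1$ and growth rates $1=h(1)\ge h(2)\ge\cdots\ge h(n)>0$ of bamboos $b_1,\dots,b_n$. Bamboo Garden Trimming (discrete version): - All heights are $0$ initially. - On each day $t=1,2,\dots$ every bamboo $b_j$ grows by $h(j)$. - At the end of each day the gardener cuts exactly one bamboo $\sigma(t)\in\{1,\dots,n\}$ back to height $0$. The height of a schedule $\sigma:\mathbb{N}\to\{1,\dots,n\}$ is the supremum, over all days $t$ and all $j$, of the height of $b_j$ at the end of day $t$ just before the cut. $H^*$ denotes the infimum of this height over all schedules. Value of algorithm PW'': - Split $\{1,\dots,n\}$ into four sets: - $S_1=\{j: \tfrac23<h(j)\le 1\}$; - $S_2=\{j:\tfrac12<h(j)\le\tfrac23\}$; - $S_3=\{j: h(j)\le\tfrac12 \text{ and } \tfrac23 2^{-k}<h(j)\le 2^{-k}\text{ for some integer }k\ge1\}$; - $S_4=\{j: h(j)\le\tfrac12\text{ and } 2^{-(k+1)}<h(j)\le \tfrac23 2^{-k}\text{ for some integer }k\ge 1\}$. - Modified growths: $h''(j)=2^{-k}$ for $j\in S_3$ and $h''(j)=\tfrac23 2^{-k}$ for $j\in S_4$, with $k$ as in the definition of the set. - Let $\pi_1=|S_1|$, $sh_3=\sum_{j\in S_3}h''(j)$, $sh_4=\sum_{j\in S_4}h''(j)$, $\pi_3=\lfloor sh_3\rfloor$, $\pi_4=\lfloor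 sh_4\rfloor$, $f_3=sh_3-\pi_3$, $f_4=sh_4-\pi_4$. - Option (a): $\pi_R(a)=\lceil f_3+f_4\rceil$ and $z(a)=\pi_1+|S_2|+\pi_3+\pi_4+\pi_R(a)$. - Option (b): if $S_2=\emptyset$ put $z(b)=+\infty$. Otherwise let $h^*=\max_{j\in S_2}h(j)$ and $f_2=\tfrac12$ if $|S_2|$ is odd, $f_2=0$ if $|S_2|$ is even. Then $\pi_R(b)=\lceil f_2+f_3+f_4\rceil$ and $z(b)=2h^*\,(\pi_1+\lfloor |S_2|/2\rfloor+\pi_3+\pi_4+\pi_R(b))$. - The value returned by algorithm PW'' is $H^{PW''}=\min\{z(a),z(b)\}$. The paper takes this as the maximum height of the periodic pinwheel trimming schedule that it builds from these partitions. *)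

theory Defs
  imports Complex_Main "HOL-Library.Extended_Real"
begin

definition bgt_instance :: "nat \<Rightarrow> (nat \<Rightarrow> real) \<Rightarrow> bool" where
  "bgt_instance n h \<longleftrightarrow> n \<ge> 1 \<and> h 1 = 1 \<and> h n > 0 \<and>
     (\<forall>i j. 1 \<le> i \<longrightarrow> i \<le> j \<longrightarrow> j \<le> n \<longrightarrow> h j \<le> h i)"

text \<open>Schedules: days t = 1,2,...; sigma t is the bamboo cut at the end of day t.\<close>
definition schedule :: "nat \<Rightarrow> (nat \<Rightarrow> nat) \<Rightarrow> bool" where
  "schedule n \<sigma> \<longleftrightarrow> (\<forall>t\<ge>1. \<sigma> t \<in> {1..n})"

definition last_cut :: "(nat \<Rightarrow> nat) \<Rightarrow> nat \<Rightarrow> nat \<Rightarrow> nat" where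
  "last_cut \<sigma> j t = Max ({0} \<union> {s. 1 \<le> s \<and> s < t \<and> \<sigma> s = j})"

text \<open>Height of bamboo j at the end of day t, just before the cut.\<close>
definition bamboo_height :: "(nat \<Rightarrow> real) \<Rightarrow> (nat \<Rightarrow> nat) \<Rightarrow> nat \<Rightarrow> nat \<Rightarrow> real" where
  "bamboo_height h \<sigma> j t = h j * real (t - last_cut \<sigma> j t)"

definition schedule_height :: "nat \<Rightarrow> (nat \<Rightarrow> real) \<Rightarrow> (nat \<Rightarrow> nat) \<Rightarrow> ereal" where
  "schedule_height n h \<sigma> =
     (SUP p \<in> {p. 1 \<le> fst p \<and> 1 \<le> snd p \<and> snd p \<le> n}. ereal (bamboo_height h \<sigma> (snd p) (fst p)))"

definition H_opt :: "nat \<Rightarrow> (nat \<Rightarrow> real) \<Rightarrow> ereal" where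
  "H_opt n h = (INF \<sigma> \<in> {\<sigma>. schedule n \<sigma>}. schedule_height n h \<sigma>)"

definition S1 :: "nat \<Rightarrow> (nat \<Rightarrow> real) \<Rightarrow> nat set" where
  "S1 n h = {j \<in> {1..n}. 2/3 < h j \<and> h j \<le> 1}"
definition S2 :: "nat \<Rightarrow> (nat \<Rightarrow> real) \<Rightarrow> nat set" where
  "S2 n h = {j \<in> {1..n}. 1/2 < h j \<and> h j \<le> 2/3}"
definition S3 :: "nat \<Rightarrow> (nat \<Rightarrow> real) \<Rightarrow> nat set" where
  "S3 n h = {j \<in> {1..n}. h j \<le> 1/2 \<and>
     (\<exists>k::nat. k \<ge> 1 \<and> 2/3 * (1/2)^k < h j \<and> h j \<le> (1/2)^k)}"
definition S4 :: "nat \<Rightarrow> (nat \<Rightarrow> real) \<Rightarrow> nat set" where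
  "S4 n h = {j \<in> {1..n}. h j \<le> 1/2 \<and>
     (\<exists>k::nat. k \<ge> 1 \<and> (1/2)^(k+1) < h j \<and> h j \<le> 2/3 * (1/2)^k)}"

definition k3 :: "(nat \<Rightarrow> real) \<Rightarrow> nat \<Rightarrow> nat" where
  "k3 h j = (THE k::nat. k \<ge> 1 \<and> 2/3 * (1/2)^k < h j \<and> h j \<le> (1/2)^k)"
definition k4 :: "(nat \<Rightarrow> real) \<Rightarrow> nat \<Rightarrow> nat" where
  "k4 h j = (THE k::nat. k \<ge> 1 \<and> (1/2)^(k+1) < h j \<and> h j \<le> 2/3 * (1/2)^k)"

definition h3 :: "(nat \<Rightarrow> real) \<Rightarrow> nat \<Rightarrow> real" where
  "h3 h j = (1/2)^(k3 h j)"
definition h4 :: "(nat \<Rightarrow> real) \<Rightarrow> nat \<Rightarrow> real" where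
  "h4 h j = 2/3 * (1/2)^(k4 h j)"

definition sh3 :: "nat \<Rightarrow> (nat \<Rightarrow> real) \<Rightarrow> real" where
  "sh3 n h = (\<Sum>j\<in>S3 n h. h3 h j)"
definition sh4 :: "nat \<Rightarrow> (nat \<Rightarrow> real) \<Rightarrow> real" where
  "sh4 n h = (\<Sum>j\<in>S4 n h. h4 h j)"

definition pi1 :: "nat \<Rightarrow> (nat \<Rightarrow> real) \<Rightarrow> int" where
  "pi1 n h = int (card (S1 n h))"
definition pi3 :: "nat \<Rightarrow> (nat \<Rightarrow> real) \<Rightarrow> int" where
  "pi3 n h = \<lfloor>sh3 n h\<rfloor>"
definition pi4 :: "nat \<Rightarrow> (nat \<Rightarrow> real) \<Rightarrow> int" where
  "pi4 n h = \<lfloor>sh4 n h\<rfloor>"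
definition f3 :: "nat \<Rightarrow> (nat \<Rightarrow> real) \<Rightarrow> real" where
  "f3 n h = sh3 n h - of_int (pi3 n h)"
definition f4 :: "nat \<Rightarrow> (nat \<Rightarrow> real) \<Rightarrow> real" where
  "f4 n h = sh4 n h - of_int (pi4 n h)"

definition z_a :: "nat \<Rightarrow> (nat \<Rightarrow> real) \<Rightarrow> real" where
  "z_a n h = of_int (pi1 n h + int (card (S2 n h)) + pi3 n h + pi4 n h
                     + \<lceil>f3 n h + f4 n h\<rceil>)"

definition f2 :: "nat \<Rightarrow> (nat \<Rightarrow> real) \<Rightarrow> real" where
  "f2 n h = (if odd (card (S2 n h)) then 1/2 else 0)"

definition z_b :: "nat \<Rightarrow> (nat \<Rightarrow> real) \<Rightarrow> ereal" where
  "z_b n h = (if S2 n h = {} then \<infinity> else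
     ereal (2 * Max (h ` S2 n h) *
       of_int (pi1 n h + int (card (S2 n h) div 2) + pi3 n h + pi4 n h
               + \<lceil>f2 n h + f3 n h + f4 n h\<rceil>)))"

definition H_PW :: "nat \<Rightarrow> (nat \<Rightarrow> real) \<Rightarrow> ereal" where
  "H_PW n h = min (ereal (z_a n h)) (z_b n h)"

end

theory Submission
  imports Defs
begin


lemma half_pow_lt:
  assumes "k < k'"
  shows "(1/2::real)^k' \<le> (1/2)^k / 2"
proof -
  have "(1/2::real)^k' \<le> (1/2)^(Suc k)"
    by (rule power_decreasing) (use assms in auto)
  thus ?thesis by simp
qed

lemma half_pow_le:
  assumes "k \<le> k'"
  shows "(1/2::real)^k' \<le> (1/2)^k"
  by (rule power_decreasing) (use assms in auto)

lemma h3_le: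
  assumes "j \<in> S3 n h"
  shows "h3 h j \<le> 3/2 * h j"
proof -
  obtain k :: nat where k: "k \<ge> 1" "2/3 * (1/2)^k < h j" "h j \<le> (1/2)^k"
    using assms unfolding S3_def by auto
  have "k3 h j = k"
    unfolding k3_def
  proof (rule the_equality)
    show "k \<ge> 1 \<and> 2/3 * (1/2)^k < h j \<and> h j \<le> (1/2)^k" using k by auto
  next
    fix k' :: nat assume k': "k' \<ge> 1 \<and> 2/3 * (1/2)^k' < h j \<and> h j \<le> (1/2)^k'"
    show "k' = k"
    proof (rule ccontr)
      assume "k' \<noteq> k"
      then consider "k < k'" | "k' < k" by linarith
      thus False
      proof cases
        case 1
        have "(1/2::real)^k' \<le> (1/2)^k / 2" using half_pow_lt[OF 1] .
        moreover have "(0::real) < (1/2)^k" by simp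
        ultimately show False using k k' by linarith
      next
        case 2
        have "(1/2::real)^k \<le> (1/2)^k' / 2" using half_pow_lt[OF 2] .
        moreover have "(0::real) < (1/2)^k'" by simp
        ultimately show False using k k' by linarith
      qed
    qed
  qed
  thus ?thesis unfolding h3_def using k by simp
qed

lemma h4_le:
  assumes "j \<in> S4 n h"
  shows "h4 h j \<le> 3/2 * h j"
proof -
  obtain k :: nat where k: "k \<ge> 1" "(1/2)^(k+1) < h j" "h j \<le> 2/3 * (1/2)^k"
    using assms unfolding S4_def by auto
  have "k4 h j = k"
    unfolding k4_def
  proof (rule the_equality)
    show "k \<ge> 1 \<and> (1/2)^(k+1) < h j \<and> h j \<le> 2/3 * (1/2)^k" using k by auto
  next
    fix k' :: nat assume k': "k' \<ge> 1 \<and> (1/2)^(k'+1) < h j \<and> h j \<le> 2/3 * (1/2)^k'"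
    show "k' = k"
    proof (rule ccontr)
      assume "k' \<noteq> k"
      then consider "k < k'" | "k' < k" by linarith
      thus False
      proof cases
        case 1
        have "(1/2::real)^k' \<le> (1/2)^k / 2" using half_pow_lt[OF 1] .
        moreover have "(0::real) < (1/2)^k" by simp
        ultimately show False using k k' by simp
      next
        case 2
        have "(1/2::real)^k \<le> (1/2)^k' / 2" using half_pow_lt[OF 2] .
        moreover have "(0::real) < (1/2)^k'" by simp
        ultimately show False using k k' by simp
      qed
    qed
  qed
  thus ?thesis unfolding h4_def using k by simp
qed

lemma S34_disj: "S3 n h \<inter> S4 n h = {}"
proof (rule ccontr)
  assume "S3 n h \<inter> S4 n h \<noteq> {}"
  then obtain j where j3: "j \<in> S3 n h" and j4: "j \<in> S4 n h" by auto
  obtain k :: nat where k: "2/3 * (1/2)^k < h j" "h j \<le> (1/2)^k"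
    using j3 unfolding S3_def by auto
  obtain k' :: nat where k': "(1/2)^(k'+1) < h j" "h j \<le> 2/3 * (1/2)^k'"
    using j4 unfolding S4_def by auto
  consider "k = k'" | "k < k'" | "k' < k" by linarith
  thus False
  proof cases
    case 1 thus False using k k' by simp
  next
    case 2
    have "(1/2::real)^k' \<le> (1/2)^k / 2" using half_pow_lt[OF 2] .
    moreover have "(0::real) < (1/2)^k" by simp
    ultimately show False using k k' by simp
  next
    case 3
    have "(1/2::real)^k \<le> (1/2)^(k'+1)" using half_pow_le[of "k'+1" k] 3 by simp
    thus False using k k' by simp
  qed
qed

lemma lc_Suc:
  assumes "t \<ge> 1"
  shows "last_cut \<sigma> j (Suc t) = (if \<sigma> t = j then t else last_cut \<sigma> j t)"
proof -
  have eq: "{s. 1 \<le> s \<and> s < Suc t \<and> \<sigma> s = j} =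
     {s. 1 \<le> s \<and> s < t \<and> \<sigma> s = j} \<union> (if \<sigma> t = j then {t} else {})"
    using assms by (auto simp: less_Suc_eq)
  have fin: "finite ({0} \<union> {s. 1 \<le> s \<and> s < t \<and> \<sigma> s = j})" by auto
  show ?thesis
  proof (cases "\<sigma> t = j")
    case True
    have "Max ({0} \<union> ({s. 1 \<le> s \<and> s < t \<and> \<sigma> s = j} \<union> {t})) = t"
      by (rule Max_eqI) auto
    thus ?thesis unfolding last_cut_def eq using True by simp
  next
    case False
    thus ?thesis unfolding last_cut_def eq by simp
  qed
qed

lemma lc_less:
  assumes "t \<ge> 1"
  shows "last_cut \<sigma> j t < t"
  unfolding last_cut_def using assms by (subst Max_less_iff) auto

lemma lc_1: "last_cut \<sigma> j (Suc 0) = 0"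
  unfolding last_cut_def by (rule Max_eqI) auto

lemma bh_Suc:
  assumes "t \<ge> 1"
  shows "bamboo_height h \<sigma> j (Suc t) =
     bamboo_height h \<sigma> j t + h j - (if \<sigma> t = j then bamboo_height h \<sigma> j t else 0)"
proof -
  have l: "last_cut \<sigma> j t < t" using lc_less[OF assms] .
  show ?thesis
  proof (cases "\<sigma> t = j")
    case True
    thus ?thesis unfolding bamboo_height_def using lc_Suc[OF assms, of \<sigma> j] by simp
  next
    case False
    have "real (Suc t - last_cut \<sigma> j t) = real (t - last_cut \<sigma> j t) + 1"
      using l by (simp add: Suc_diff_le of_nat_Suc)
    thus ?thesis unfolding bamboo_height_def using lc_Suc[OF assms, of \<sigma> j] False
      by (simp add: algebra_simps)
  qed
qed


lemma sum_heights:
  assumes sch: "schedule n \<sigma>"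
    and bnd: "\<And>t j. t \<ge> 1 \<Longrightarrow> j \<in> {1..n} \<Longrightarrow> bamboo_height h \<sigma> j t \<le> H"
    and T: "T \<ge> 1"
  shows "real T * (\<Sum>j\<in>{1..n}. h j) - real (T - 1) * H \<le> (\<Sum>j\<in>{1..n}. bamboo_height h \<sigma> j T)"
  using T
proof (induction T rule: dec_induct)
  case base
  have "bamboo_height h \<sigma> j 1 = h j" for j by (simp add: bamboo_height_def lc_1)
  thus ?case by simp
next
  case (step t)
  have st: "\<sigma> t \<in> {1..n}" using sch step.hyps unfolding schedule_def by auto
  have "(\<Sum>j\<in>{1..n}. bamboo_height h \<sigma> j (Suc t)) =
     (\<Sum>j\<in>{1..n}. (bamboo_height h \<sigma> j t + h j) - (if \<sigma> t = j then bamboo_height h \<sigma> j t else 0))"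
    by (rule sum.cong[OF refl]) (rule bh_Suc[OF step.hyps(1)])
  also have "\<dots> = (\<Sum>j\<in>{1..n}. bamboo_height h \<sigma> j t + h j) - (\<Sum>j\<in>{1..n}. (if \<sigma> t = j then bamboo_height h \<sigma> j t else 0))"
    by (rule sum_subtractf)
  also have "(\<Sum>j\<in>{1..n}. (if \<sigma> t = j then bamboo_height h \<sigma> j t else 0)) = bamboo_height h \<sigma> (\<sigma> t) t"
    using st by (simp add: sum.delta')
  also have "(\<Sum>j\<in>{1..n}. bamboo_height h \<sigma> j t + h j) = (\<Sum>j\<in>{1..n}. bamboo_height h \<sigma> j t) + (\<Sum>j\<in>{1..n}. h j)"
    by (rule sum.distrib)
  finally have e: "(\<Sum>j\<in>{1..n}. bamboo_height h \<sigma> j (Suc t)) =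
      (\<Sum>j\<in>{1..n}. bamboo_height h \<sigma> j t) + (\<Sum>j\<in>{1..n}. h j) - bamboo_height h \<sigma> (\<sigma> t) t" .
  have b: "bamboo_height h \<sigma> (\<sigma> t) t \<le> H" using bnd[OF step.hyps(1) st] .
  have tt: "real (Suc t - 1) = real (t - 1) + 1" using step.hyps(1) by simp
  have "real (Suc t) = real t + 1" by simp
  show ?case unfolding e tt \<open>real (Suc t) = real t + 1\<close> using b step.IH
    by (simp add: algebra_simps)
qed

lemma real_le_of_bound:
  fixes S H :: real
  assumes "\<And>T::nat. T \<ge> 1 \<Longrightarrow> real T * S - real (T - 1) * H \<le> real n * H"
  shows "S \<le> H"
proof (rule ccontr)
  assume "\<not> S \<le> H"
  hence d: "S - H > 0" by simp
  obtain T :: nat where T: "real T > \<bar>real n * H - H\<bar> / (S - H)" using reals_Archimedean2 by blast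
  have T1: "T \<ge> 1"
  proof (rule ccontr)
    assume "\<not> T \<ge> 1" hence "T = 0" by simp
    moreover have "\<bar>real n * H - H\<bar> / (S - H) \<ge> 0" using d by simp
    ultimately show False using T by simp
  qed
  have "real T * S - real (T - 1) * H \<le> real n * H" using assms T1 .
  moreover have "real (T - 1) = real T - 1" using T1 by simp
  ultimately have "real T * (S - H) \<le> real n * H - H" by (simp add: algebra_simps)
  moreover have "real T * (S - H) > \<bar>real n * H - H\<bar>" using T d by (simp add: pos_divide_less_eq)
  ultimately show False by linarith
qed

lemma H_opt_lb:
  assumes inst: "bgt_instance n h"
  shows "ereal (\<Sum>j\<in>{1..n}. h j) \<le> H_opt n h"
  unfolding H_opt_def
proof (rule INF_greatest)
  fix \<sigma> assume "\<sigma> \<in> {\<sigma>. schedule n \<sigma>}"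
  hence sch: "schedule n \<sigma>" by simp
  let ?P = "{p. 1 \<le> fst p \<and> 1 \<le> snd p \<and> snd p \<le> n}"
  have up: "ereal (bamboo_height h \<sigma> j t) \<le> schedule_height n h \<sigma>" if "t \<ge> 1" "j \<in> {1..n}" for t j
    unfolding schedule_height_def
    by (rule SUP_upper2[of "(t,j)"]) (use that in auto)
  have n1: "n \<ge> 1" using inst unfolding bgt_instance_def by auto
  show "ereal (\<Sum>j\<in>{1..n}. h j) \<le> schedule_height n h \<sigma>"
  proof (cases "schedule_height n h \<sigma>")
    case (real H)
    have bnd: "bamboo_height h \<sigma> j t \<le> H" if "t \<ge> 1" "j \<in> {1..n}" for t j
      using up[OF that] real by simp
    have "(\<Sum>j\<in>{1..n}. h j) \<le> H"
    proof (rule real_le_of_bound)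
      fix T :: nat assume T: "T \<ge> 1"
      have "real T * (\<Sum>j\<in>{1..n}. h j) - real (T - 1) * H \<le> (\<Sum>j\<in>{1..n}. bamboo_height h \<sigma> j T)"
        using sum_heights[OF sch bnd T] by blast
      also have "\<dots> \<le> (\<Sum>j\<in>{1..n}. H)" by (rule sum_mono) (use bnd T in auto)
      also have "\<dots> = real n * H" by simp
      finally show "real T * (\<Sum>j\<in>{1..n}. h j) - real (T - 1) * H \<le> real n * H" .
    qed
    thus ?thesis using real by simp
  next
    case PInf thus ?thesis by simp
  next
    case MInf
    have "ereal (bamboo_height h \<sigma> 1 1) \<le> schedule_height n h \<sigma>" using up n1 by auto
    thus ?thesis using MInf by simp
  qed
qed


theorem proposition2:
  fixes n :: nat and h :: "nat \<Rightarrow> real"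
  assumes "bgt_instance n h"
    and "pi1 n h + pi3 n h + pi4 n h - 1 \<ge> 1"
    and "int (card (S2 n h)) \<le> pi1 n h + pi3 n h + pi4 n h - 1"
  shows "H_PW n h \<le> ereal (15/8) * H_opt n h"
proof -
  have n1: "n \<ge> 1" and h1: "h 1 = 1" and hn: "h n > 0"
    and mono: "\<And>i j. 1 \<le> i \<Longrightarrow> i \<le> j \<Longrightarrow> j \<le> n \<Longrightarrow> h j \<le> h i"
    using assms(1) unfolding bgt_instance_def by auto
  have pos: "h j > 0" if "j \<in> {1..n}" for j
    using mono[of j n] that hn by auto
  let ?S = "\<Sum>j\<in>{1..n}. h j"
  have sub: "S1 n h \<subseteq> {1..n}" "S2 n h \<subseteq> {1..n}" "S3 n h \<subseteq> {1..n}" "S4 n h \<subseteq> {1..n}"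
    unfolding S1_def S2_def S3_def S4_def by auto
  have fin: "finite (S1 n h)" "finite (S2 n h)" "finite (S3 n h)" "finite (S4 n h)"
    using sub finite_subset by blast+
  have d12: "S1 n h \<inter> S2 n h = {}" unfolding S1_def S2_def by auto
  have d123: "(S1 n h \<union> S2 n h) \<inter> S3 n h = {}" unfolding S1_def S2_def S3_def by auto
  have d1234: "(S1 n h \<union> S2 n h \<union> S3 n h) \<inter> S4 n h = {}"
    using S34_disj[of n h] unfolding S1_def S2_def S4_def by auto
  have "(\<Sum>j\<in>S1 n h \<union> S2 n h \<union> S3 n h \<union> S4 n h. h j) \<le> ?S"
    by (rule sum_mono2) (use sub pos in \<open>auto intro: less_imp_le\<close>)
  moreover have "(\<Sum>j\<in>S1 n h \<union> S2 n h \<union> S3 n h \<union> S4 n h. h j) =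
     (\<Sum>j\<in>S1 n h. h j) + (\<Sum>j\<in>S2 n h. h j) + (\<Sum>j\<in>S3 n h. h j) + (\<Sum>j\<in>S4 n h. h j)"
    using fin d12 d123 d1234 by (simp add: sum.union_disjoint)
  ultimately have Sge: "(\<Sum>j\<in>S1 n h. h j) + (\<Sum>j\<in>S2 n h. h j) + (\<Sum>j\<in>S3 n h. h j) + (\<Sum>j\<in>S4 n h. h j) \<le> ?S"
    by simp
  have one: "1 \<in> S1 n h" unfolding S1_def using n1 h1 by auto
  have "(\<Sum>j\<in>S1 n h. h j) = h 1 + (\<Sum>j\<in>S1 n h - {1}. h j)"
    using fin(1) one by (simp add: sum.remove)
  moreover have "real (card (S1 n h - {1})) * (2/3) \<le> (\<Sum>j\<in>S1 n h - {1}. h j)"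
    by (rule sum_bounded_below) (auto simp: S1_def)
  moreover have "real (card (S1 n h - {1})) = real (card (S1 n h)) - 1"
  proof -
    have "card (S1 n h) \<ge> 1" using fin(1) one by (metis One_nat_def Suc_leI card_gt_0_iff empty_iff)
    thus ?thesis using fin(1) one by (simp add: card_Diff_singleton of_nat_diff)
  qed
  ultimately have A: "(\<Sum>j\<in>S1 n h. h j) \<ge> 1/3 + 2/3 * real (card (S1 n h))"
    using h1 by (simp add: algebra_simps)
  have B: "real (card (S2 n h)) * (1/2) \<le> (\<Sum>j\<in>S2 n h. h j)"
    by (rule sum_bounded_below) (auto simp: S2_def)
  have C3: "sh3 n h \<le> 3/2 * (\<Sum>j\<in>S3 n h. h j)"
    unfolding sh3_def sum_distrib_left by (rule sum_mono) (rule h3_le)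
  have C4: "sh4 n h \<le> 3/2 * (\<Sum>j\<in>S4 n h. h j)"
    unfolding sh4_def sum_distrib_left by (rule sum_mono) (rule h4_le)
  have fl3: "real_of_int (pi3 n h) \<le> sh3 n h" unfolding pi3_def by simp
  have fl4: "real_of_int (pi4 n h) \<le> sh4 n h" unfolding pi4_def by simp
  have ce: "real_of_int \<lceil>f3 n h + f4 n h\<rceil> \<le> f3 n h + f4 n h + 1" by (rule of_int_ceiling_le_add_one)
  have za: "z_a n h = real (card (S1 n h)) + real (card (S2 n h)) + real_of_int (pi3 n h)
       + real_of_int (pi4 n h) + real_of_int \<lceil>f3 n h + f4 n h\<rceil>"
    unfolding z_a_def pi1_def by simp
  have a2: "real (card (S1 n h)) + real_of_int (pi3 n h) + real_of_int (pi4 n h) \<ge> 2"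
    using assms(2) unfolding pi1_def by linarith
  have a3: "real (card (S2 n h)) \<le> real (card (S1 n h)) + real_of_int (pi3 n h) + real_of_int (pi4 n h) - 1"
    using assms(3) unfolding pi1_def by linarith
  have main: "z_a n h \<le> 15/8 * ?S"
    using za ce fl3 fl4 a2 a3 A B C3 C4 Sge unfolding f3_def f4_def by linarith
  have "H_PW n h \<le> ereal (z_a n h)" unfolding H_PW_def by simp
  also have "\<dots> \<le> ereal (15/8) * ereal ?S" using main by simp
  also have "\<dots> \<le> ereal (15/8) * H_opt n h"
    by (rule ereal_mult_left_mono) (use H_opt_lb[OF assms(1)] in auto)
  finally show ?thesis .
qed

end
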